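(* Let $X\in\mathbb{R}^{n\times nN}$ and $U\in\mathbb{R}^{m\times nN}$ satisfy $AX+BU=X(P\otimes I_n)$ and $X(\mathrm{e}_1\otimes I_n)=I_n$. Then $\Psi=\begin{bmatrix}X\\ Z\end{bmatrix}\in\mathbb{R}^{nN\times nN}$ is invertible, and if $(K,H,G,F)$ is the (unique) solution of $\begin{bmatrix} K & H \\ G & F \end{bmatrix}\Psi=\begin{bmatrix} U \\ V \end{bmatrix}$, then the closed-loop matrix $\mathcal{A}_{cl}=\begin{bmatrix}A+BK & BH\\ G & F\end{bmatrix}$ satisfies $\mathcal{A}_{cl}=\Psi(P\otimes I_n)\Psi^{-1}$.
   Context: $A\in\mathbb{R}^{n\times n}$, $B\in\mathbb{R}^{n\times m}$, $N\ge 2$. $\mathrm{e}_1\in\mathbb{R}^N$ is the first standard basis vector. $P\in\mathbb{R}^{N\times N}$ is the nilpotent shift matrix $P=\begin{bmatrix}0 & 0\\ I_{N-1} & 0\end{bmatrix}$. $\otimes$ is the Kronecker product. $Z=\begin{bmatrix}0_{n(N-1)\times n} & I_{n(N-1)}\end{bmatrix}$ and $V=Z(P\otimes I_n)$. $K\in\mathbb{R}^{m\times n}$, $H\in\mathbb{R}^{m\times n(N-1)}$, $G\in\mathbb{R}^{n(N-1)\times n}$, $F\in\mathbb{R}^{n(N-1)\times n(N-1)}$. *)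

theory Defs
  imports "Jordan_Normal_Form.Matrix"
begin

definition kron :: "'a :: times mat \<Rightarrow> 'a mat \<Rightarrow> 'a mat" (infixl \<open>\<otimes>\<^sub>k\<close> 70) where
  "kron M R = mat (dim_row M * dim_row R) (dim_col M * dim_col R)
     (\<lambda>(i,j). M $$ (i div dim_row R, j div dim_col R) * R $$ (i mod dim_row R, j mod dim_col R))"

definition shiftP :: "nat \<Rightarrow> real mat" where
  "shiftP N = mat N N (\<lambda>(i,j). if i = j + 1 then 1 else 0)"

definition e1 :: "nat \<Rightarrow> real mat" where
  "e1 N = mat N 1 (\<lambda>(i,j). if i = 0 then 1 else 0)"

text \<open>Z = [0_{n(N-1) x n}, I_{n(N-1)}].\<close>
definition Zmat :: "nat \<Rightarrow> nat \<Rightarrow> real mat" where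
  "Zmat n N = mat (n * (N - 1)) (n * N) (\<lambda>(i,j). if j = i + n then 1 else 0)"

definition Vmat :: "nat \<Rightarrow> nat \<Rightarrow> real mat" where
  "Vmat n N = Zmat n N * (shiftP N \<otimes>\<^sub>k 1\<^sub>m n)"

end

theory Submission
  imports Defs "Jordan_Normal_Form.Determinant"
begin

lemma append_rows_index:
  assumes "A \<in> carrier_mat r1 c" "B \<in> carrier_mat r2 c" "i < r1 + r2" "j < c"
  shows "(A @\<^sub>r B) $$ (i,j) = (if i < r1 then A $$ (i,j) else B $$ (i - r1, j))"
  using assms unfolding append_rows_def by auto

lemma append_rows_eqD:
  assumes "A \<in> carrier_mat r1 c" "B \<in> carrier_mat r2 c"
    "C \<in> carrier_mat r1 c" "D \<in> carrier_mat r2 c"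
    "A @\<^sub>r B = C @\<^sub>r D"
  shows "A = C \<and> B = D"
proof
  show "A = C"
  proof (rule eq_matI)
    fix i j assume ij: "i < dim_row C" "j < dim_col C"
    have "(A @\<^sub>r B) $$ (i,j) = (C @\<^sub>r D) $$ (i,j)" using assms(5) by simp
    thus "A $$ (i,j) = C $$ (i,j)"
      using ij assms(1-4) by (simp add: append_rows_index)
  qed (use assms in auto)
  show "B = D"
  proof (rule eq_matI)
    fix i j assume ij: "i < dim_row D" "j < dim_col D"
    have "(A @\<^sub>r B) $$ (i + r1,j) = (C @\<^sub>r D) $$ (i + r1,j)" using assms(5) by simp
    thus "B $$ (i,j) = D $$ (i,j)"
      using ij assms(1-4) by (simp add: append_rows_index)
  qed (use assms in auto)
qed

lemma four_block_mult_append_rows: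
  assumes "a \<in> carrier_mat r1 k1" "b \<in> carrier_mat r1 k2" "c \<in> carrier_mat r2 k1" "d \<in> carrier_mat r2 k2"
    "X \<in> carrier_mat k1 nc" "Z \<in> carrier_mat k2 nc"
  shows "four_block_mat a b c d * (X @\<^sub>r Z) = (a * X + b * Z) @\<^sub>r (c * X + d * Z)"
proof -
  have "four_block_mat a b c d * (X @\<^sub>r Z) = four_block_mat (a * X + b * Z) (a * 0\<^sub>m k1 0 + b * 0\<^sub>m k2 0)
      (c * X + d * Z) (c * 0\<^sub>m k1 0 + d * 0\<^sub>m k2 0)"
  proof -
    have dims: "dim_row X = k1" "dim_row Z = k2" using assms by auto
    show ?thesis unfolding append_rows_def dims
      by (rule mult_four_block_mat) (use assms in auto)
  qed
  also have "a * 0\<^sub>m k1 0 + b * 0\<^sub>m k2 0 = 0\<^sub>m r1 0" using assms by auto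
  also have "c * 0\<^sub>m k1 0 + d * 0\<^sub>m k2 0 = 0\<^sub>m r2 0" using assms by auto
  finally show ?thesis unfolding append_rows_def using assms by simp
qed

lemma append_rows_mult:
  assumes "X \<in> carrier_mat r1 c" "Z \<in> carrier_mat r2 c" "S \<in> carrier_mat c d"
  shows "(X @\<^sub>r Z) * S = (X * S) @\<^sub>r (Z * S)"
proof -
  have cXZ0: "X @\<^sub>r Z \<in> carrier_mat (r1 + r2) c" using assms by auto
  hence dXZ0: "dim_row (X @\<^sub>r Z) = r1 + r2" "dim_col (X @\<^sub>r Z) = c" by auto
  have cc: "(X * S) @\<^sub>r (Z * S) \<in> carrier_mat (r1 + r2) d" using assms by auto
  hence dcc: "dim_row ((X * S) @\<^sub>r (Z * S)) = r1 + r2" "dim_col ((X * S) @\<^sub>r (Z * S)) = d" by auto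
  have dS: "dim_col S = d" using assms by auto
  show ?thesis
  proof (rule eq_matI)
    fix i j assume ij: "i < dim_row ((X * S) @\<^sub>r (Z * S))" "j < dim_col ((X * S) @\<^sub>r (Z * S))"
    hence i: "i < r1 + r2" and j: "j < d" using dcc by auto
    have row: "row (X @\<^sub>r Z) i = (if i < r1 then row X i else row Z (i - r1))"
      by (rule eq_vecI, insert assms i dXZ0, auto simp: append_rows_index)
    show "((X @\<^sub>r Z) * S) $$ (i, j) = ((X * S) @\<^sub>r (Z * S)) $$ (i, j)"
      using assms i j row dXZ0
      by (subst append_rows_index[of _ r1 d _ r2]) auto
  qed (use dXZ0 dcc dS in auto)
qed

lemma prod_list_ones: "prod_list (map (\<lambda>_. 1::real) xs) = 1"
  by (induct xs) auto

theorem mainTheorem2: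
  fixes A B X U :: "real mat" and n m N :: nat
  assumes "N \<ge> 2"
    and "A \<in> carrier_mat n n" and "B \<in> carrier_mat n m"
    and "X \<in> carrier_mat n (n * N)" and "U \<in> carrier_mat m (n * N)"
    and "A * X + B * U = X * (shiftP N \<otimes>\<^sub>k 1\<^sub>m n)"
    and "X * (e1 N \<otimes>\<^sub>k 1\<^sub>m n) = 1\<^sub>m n"
  shows "invertible_mat (X @\<^sub>r Zmat n N) \<and>
    (\<forall>K H G F. K \<in> carrier_mat m n \<and> H \<in> carrier_mat m (n * (N - 1)) \<and>
        G \<in> carrier_mat (n * (N - 1)) n \<and> F \<in> carrier_mat (n * (N - 1)) (n * (N - 1)) \<and>
        four_block_mat K H G F * (X @\<^sub>r Zmat n N) = U @\<^sub>r Vmat n N \<longrightarrow>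
      (\<forall>\<Psi>i. (X @\<^sub>r Zmat n N) * \<Psi>i = 1\<^sub>m (n * N) \<and> \<Psi>i * (X @\<^sub>r Zmat n N) = 1\<^sub>m (n * N) \<longrightarrow>
        four_block_mat (A + B * K) (B * H) G F = (X @\<^sub>r Zmat n N) * (shiftP N \<otimes>\<^sub>k 1\<^sub>m n) * \<Psi>i))"
proof -
  note A = assms(2) and Bc = assms(3) and Xc = assms(4) and Uc = assms(5)
  define S where "S = shiftP N \<otimes>\<^sub>k 1\<^sub>m n"
  define Z where "Z = Zmat n N"
  define \<Psi> where "\<Psi> = X @\<^sub>r Z"
  have nN: "n * N = n + n * (N - 1)"
  proof -
    obtain N' where "N = Suc N'" using assms(1) by (cases N) auto
    thus ?thesis by simp
  qed
  have Sc: "S \<in> carrier_mat (n * N) (n * N)"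
    unfolding S_def kron_def shiftP_def by (auto simp: mult.commute)
  have Zc: "Z \<in> carrier_mat (n * (N - 1)) (n * N)" unfolding Z_def Zmat_def by auto
  have Psic: "\<Psi> \<in> carrier_mat (n * N) (n * N)" unfolding \<Psi>_def
    using carrier_append_rows[OF Xc Zc] by (simp only: nN)
  have Xid: "X $$ (i,j) = (if i = j then 1 else 0)" if ij: "i < n" "j < n" for i j
  proof -
    define E where "E = e1 N \<otimes>\<^sub>k 1\<^sub>m n"
    have Ec: "E \<in> carrier_mat (n * N) n" unfolding E_def kron_def e1_def by (auto simp: mult.commute)
    have jN: "j < n * N" using ij nN by auto
    have Ek: "E $$ (k,j) = (if k = j then 1 else 0)" if "k < n * N" for k
    proof -
      have "E $$ (k,j) = (if k div n = 0 then 1 else 0) * (1\<^sub>m n $$ (k mod n, j))"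
        unfolding E_def kron_def e1_def using that ij
        by (simp add: mult.commute less_mult_imp_div_less)
      also have "\<dots> = (if k = j then 1 else 0)"
        using ij by (cases "k < n") (auto simp: div_eq_0_iff)
      finally show ?thesis .
    qed
    have "(X * E) $$ (i,j) = (\<Sum>k<n*N. X $$ (i,k) * E $$ (k,j))"
      using Xc Ec ij by (simp add: scalar_prod_def row_def col_def atLeast0LessThan)
    also have "\<dots> = (\<Sum>k<n*N. if k = j then X $$ (i,k) else 0)"
      by (rule sum.cong) (auto simp: Ek)
    also have "\<dots> = X $$ (i,j)" using jN by simp
    finally show ?thesis using assms(7) ij unfolding E_def by simp
  qed
  have Psi_idx: "\<Psi> $$ (i,j) = (if i < n then X $$ (i,j) else if j = i then 1 else 0)"
    if "i < n * N" "j < n * N" for i j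
    unfolding \<Psi>_def using that Xc Zc nN
    by (subst append_rows_index[of _ n "n*N" _ "n*(N-1)"]) (auto simp: Z_def Zmat_def)
  have ut: "upper_triangular \<Psi>"
  proof
    fix i j assume "j < i" "i < dim_row \<Psi>"
    thus "\<Psi> $$ (i,j) = 0" using Psic Psi_idx[of i j] Xid[of i j] by auto
  qed
  have "det \<Psi> = prod_list (diag_mat \<Psi>)" by (rule det_upper_triangular[OF ut Psic])
  also have "diag_mat \<Psi> = map (\<lambda>_. 1) [0..<n*N]"
  proof -
    have d1: "\<Psi> $$ (i,i) = 1" if "i < n*N" for i
    proof (cases "i < n")
      case True thus ?thesis using Psi_idx[OF that that] Xid[OF True True] by simp
    next
      case False thus ?thesis using Psi_idx[OF that that] by simp
    qed
    have "diag_mat \<Psi> = map (\<lambda>i. \<Psi> $$ (i,i)) [0..<n*N]"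
      using Psic unfolding diag_mat_def by (simp del: upt_Suc)
    also have "\<dots> = map (\<lambda>_. 1) [0..<n*N]"
      by (rule map_cong) (auto simp: d1)
    finally show ?thesis .
  qed
  also have "prod_list (map (\<lambda>_. 1::real) [0..<n*N]) = 1"
    by (rule prod_list_ones)
  finally have "det \<Psi> \<noteq> 0" by simp
  from det_non_zero_imp_unit[OF Psic this]
  have "\<Psi> \<in> Units (ring_mat TYPE(real) (n*N) undefined)" .
  then obtain B' where "B' \<in> carrier_mat (n*N) (n*N)" "B' * \<Psi> = 1\<^sub>m (n*N)" "\<Psi> * B' = 1\<^sub>m (n*N)"
    unfolding Units_def ring_mat_def by auto
  hence inv: "invertible_mat \<Psi>"
    unfolding invertible_mat_def inverts_mat_def square_mat.simps using Psic by auto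
  have part2: "four_block_mat (A + B * K) (B * H) G F = \<Psi> * S * \<Psi>i"
    if Kc: "K \<in> carrier_mat m n" and Hc: "H \<in> carrier_mat m (n * (N - 1))"
      and Gc: "G \<in> carrier_mat (n * (N - 1)) n" and Fc: "F \<in> carrier_mat (n * (N - 1)) (n * (N - 1))"
      and eq: "four_block_mat K H G F * \<Psi> = U @\<^sub>r Vmat n N"
      and i1: "\<Psi> * \<Psi>i = 1\<^sub>m (n * N)" and i2: "\<Psi>i * \<Psi> = 1\<^sub>m (n * N)"
    for K H G F \<Psi>i
  proof -
    have Xc': "X \<in> carrier_mat n (n + n*(N-1))" using Xc by (simp only: nN)
    have Zc': "Z \<in> carrier_mat (n*(N-1)) (n + n*(N-1))" using Zc by (simp only: nN)
    have Vc: "Vmat n N \<in> carrier_mat (n * (N - 1)) (n * N)"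
      unfolding Vmat_def using Zc Sc unfolding Z_def S_def by auto
    have "four_block_mat K H G F * \<Psi> = (K * X + H * Z) @\<^sub>r (G * X + F * Z)"
      unfolding \<Psi>_def by (rule four_block_mult_append_rows[OF Kc Hc Gc Fc Xc' Zc'])
    with eq have e: "K * X + H * Z = U \<and> G * X + F * Z = Vmat n N"
      using Kc Hc Gc Fc Xc Zc Uc Vc by (intro append_rows_eqD[of _ m "n*N" _ "n*(N-1)"]) auto
    let ?Acl = "four_block_mat (A + B * K) (B * H) G F"
    have ABK: "A + B * K \<in> carrier_mat n n" using A Bc Kc by auto
    have Aclc: "?Acl \<in> carrier_mat (n*N) (n*N)"
      using four_block_carrier_mat[OF ABK Fc] by (simp only: nN)
    have BK: "B * K \<in> carrier_mat n n" using Bc Kc by auto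
    have c1: "(A + B * K) * X = A * X + B * K * X" by (rule add_mult_distrib_mat[OF A BK Xc])
    have c1': "B * K * X = B * (K * X)" by (rule assoc_mult_mat[OF Bc Kc Xc])
    have c2: "B * H * Z = B * (H * Z)" by (rule assoc_mult_mat[OF Bc Hc Zc])
    have KX: "K * X \<in> carrier_mat m (n*N)" using Kc Xc by auto
    have HZ: "H * Z \<in> carrier_mat m (n*N)" using Hc Zc by auto
    have c3: "B * (K * X + H * Z) = B * (K * X) + B * (H * Z)"
      by (rule mult_add_distrib_mat[OF Bc KX HZ])
    have AX: "A * X \<in> carrier_mat n (n*N)" using A Xc by auto
    have BKX: "B * (K * X) \<in> carrier_mat n (n*N)" using Bc KX by auto
    have BHZ: "B * (H * Z) \<in> carrier_mat n (n*N)" using Bc HZ by auto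
    have "(A + B * K) * X + B * H * Z = (A * X + B * (K * X)) + B * (H * Z)"
      unfolding c1 c1' c2 ..
    also have "\<dots> = A * X + (B * (K * X) + B * (H * Z))"
      by (rule assoc_add_mat[OF AX BKX BHZ])
    also have "\<dots> = A * X + B * (K * X + H * Z)" unfolding c3 ..
    also have "\<dots> = X * S" unfolding conjunct1[OF e] using assms(6) unfolding S_def .
    finally have t: "(A + B * K) * X + B * H * Z = X * S" .
    have e2: "G * X + F * Z = Z * S" using conjunct2[OF e] unfolding Vmat_def Z_def S_def .
    have BH: "B * H \<in> carrier_mat n (n * (N - 1))" using Bc Hc by auto
    have "?Acl * \<Psi> = ((A + B * K) * X + B * H * Z) @\<^sub>r (G * X + F * Z)"
      unfolding \<Psi>_def by (rule four_block_mult_append_rows[OF ABK BH Gc Fc Xc' Zc'])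
    also have "\<dots> = (X * S) @\<^sub>r (Z * S)" unfolding t e2 ..
    also have "\<dots> = \<Psi> * S" unfolding \<Psi>_def by (rule append_rows_mult[OF Xc Zc Sc, symmetric])
    finally have AP: "?Acl * \<Psi> = \<Psi> * S" .
    have r1: "dim_row \<Psi>i = n*N" using arg_cong[OF i2, of dim_row] by simp
    have r2: "dim_col \<Psi>i = n*N" using arg_cong[OF i1, of dim_col] by simp
    have Pic: "\<Psi>i \<in> carrier_mat (n*N) (n*N)" using r1 r2 by (rule carrier_matI)
    have "?Acl = ?Acl * (\<Psi> * \<Psi>i)" unfolding i1 by (rule right_mult_one_mat[OF Aclc, symmetric])
    also have "\<dots> = (?Acl * \<Psi>) * \<Psi>i" by (rule assoc_mult_mat[OF Aclc Psic Pic, symmetric])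
    also have "\<dots> = \<Psi> * S * \<Psi>i" unfolding AP ..
    finally show ?thesis .
  qed
  show ?thesis
  proof (intro conjI allI impI)
    show "invertible_mat (X @\<^sub>r Zmat n N)" using inv unfolding \<Psi>_def Z_def .
  next
    fix K H G F \<Psi>i
    assume h1: "K \<in> carrier_mat m n \<and> H \<in> carrier_mat m (n * (N - 1)) \<and>
        G \<in> carrier_mat (n * (N - 1)) n \<and> F \<in> carrier_mat (n * (N - 1)) (n * (N - 1)) \<and>
        four_block_mat K H G F * (X @\<^sub>r Zmat n N) = U @\<^sub>r Vmat n N"
      and h2: "(X @\<^sub>r Zmat n N) * \<Psi>i = 1\<^sub>m (n * N) \<and> \<Psi>i * (X @\<^sub>r Zmat n N) = 1\<^sub>m (n * N)"
    from h1 h2 show "four_block_mat (A + B * K) (B * H) G F = (X @\<^sub>r Zmat n N) * (shiftP N \<otimes>\<^sub>k 1\<^sub>m n) * \<Psi>i"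
      using part2[of K H G F \<Psi>i, unfolded \<Psi>_def Z_def S_def] by blast
  qed
qed

end
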